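(* Let a group $G$ act freely on a connected weighted simplicial complex $\Omega$ on $[n]$, let $\mathcal V_0,\ldots,\mathcal V_n$ be complex vector spaces with $\mathcal V_i=\mathcal V_j$ whenever $i,j$ lie in the same $G$-orbit, and $\mathcal V=\mathcal V_0\otimes\cdots\otimes\mathcal V_n$. Then every $G$-invariant $v\in\mathcal V$ satisfies ${\rm rank}_{(\Omega,G)}(v)<\infty$. Moreover, for every decomposition $v=\sum_j w^{[0]}_j\otimes\cdots\otimes w^{[n]}_j$ of $v$ as a finite sum of elementary tensors ($w^{[i]}_j\in\mathcal V_i$), there is an $(\Omega,G)$-decomposition of $v$ all of whose local vectors are nonnegative real multiples of vectors $w^{[k]}_j$ from this decomposition.
   Context: $[n]=\{0,\ldots,n\}$. A weighted simplicial complex (wsc) on $[n]$ is a function $\Omega\colon\mathcal P([n])\to\mathbb N=\{0,1,\ldots\}$ such that $S_1\subseteq S_2$ implies $\Omega(S_1)\mid\Omega(S_2)$; simplices are sets with $\Omega(S)\neq0$, every singleton is assumed to be a simplex, facets are inclusion-maximal simplices, $\mathcal F$ is the set of facets. $\widetilde{\mathcal F}$ is the multiset containing each facet $F$ exactly $\Omega(F)$ times, with collapse map $c\colon\widetilde{\mathcal F}\to\mathcal F$; for $i\in[n]$, $\widetilde{\mathcal F}_i\subseteq\widetilde{\mathcal F}$ consists of the copies of facets containing $i$. $\Omega$ is connected if any two vertices are joined by a chain of vertices in which consecutive ones lie in a common facet. A group action of $G$ on $\Omega$ is an action of $G$ on $[n]$ with $\Omega(gS)=\Omega(S)$ for all $S,g$,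 together with an action of $G$ on $\widetilde{\mathcal F}$ such that $c(gx)=gc(x)$; then $g$ maps $\widetilde{\mathcal F}_i$ bijectively onto $\widetilde{\mathcal F}_{gi}$. The action is free if the action on $\widetilde{\mathcal F}$ is free. $G$ acts on $\mathcal V$ by permuting tensor factors according to its action on $[n]$; $v$ is $G$-invariant if fixed by this action. For $\beta\colon\widetilde{\mathcal F}_i\to\mathcal I$ and $g\in G$, ${}^g\beta\colon\widetilde{\mathcal F}_{gi}\to\mathcal I$ is $x\mapsto\beta(g^{-1}x)$; for $\alpha\colon\widetilde{\mathcal F}\to\mathcal I$, $\alpha_{\mid i}$ is its restriction to $\widetilde{\mathcal F}_i$. An $(\Omega,G)$-decomposition of $v\in\mathcal V$ consists of a finite set $\mathcal I$ and local vectors $v^{[i]}_\beta\in\mathcal V_i$ ($i\in[n]$, $\beta\in\mathcal I^{\widetilde{\mathcal F}_i}$) such that (a) $v=\sum_{\alpha\in\mathcal I^{\widetilde{\mathcal F}}}v^{[0]}_{\alpha_{\mid0}}\otimes\cdots\otimes v^{[n]}_{\alpha_{\mid n}}$ and (b) $v^{[i]}_\beta=v^{[gi]}_{{}^g\beta}$ for all $i\in[n]$, $g\in G$, $\beta\in\mathcal I^{\widetilde{\mathcal F}_i}$. ${\rm rank}_{(\Omega,G)}(v)$ is the minimal $|\mathcal I|$ over all such decompositions ($\infty$ if none exists). *)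

theory Defs
  imports Complex_Main "HOL-Algebra.Group_Action" "HOL-Library.Extended_Nat" "HOL-Library.Function_Algebras"
begin

definition wsc :: "nat \<Rightarrow> (nat set \<Rightarrow> nat) \<Rightarrow> bool" where
  "wsc n \<Omega> \<longleftrightarrow>
     (\<forall>S1 S2. S1 \<subseteq> S2 \<and> S2 \<subseteq> {..n} \<longrightarrow> \<Omega> S1 dvd \<Omega> S2) \<and>
     (\<forall>i\<le>n. \<Omega> {i} \<noteq> 0)"

definition simplex :: "nat \<Rightarrow> (nat set \<Rightarrow> nat) \<Rightarrow> nat set \<Rightarrow> bool" where
  "simplex n \<Omega> S \<longleftrightarrow> S \<subseteq> {..n} \<and> \<Omega> S \<noteq> 0"

definition facet :: "nat \<Rightarrow> (nat set \<Rightarrow> nat) \<Rightarrow> nat set \<Rightarrow> bool" where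
  "facet n \<Omega> F \<longleftrightarrow> simplex n \<Omega> F \<and> (\<forall>T. simplex n \<Omega> T \<and> F \<subseteq> T \<longrightarrow> T = F)"

text \<open>The multiset of facets with multiplicities: facet F occurs as the copies (F,k), k < Omega F.
  The collapse map is fst.\<close>
definition tF :: "nat \<Rightarrow> (nat set \<Rightarrow> nat) \<Rightarrow> (nat set \<times> nat) set" where
  "tF n \<Omega> = {(F, k). facet n \<Omega> F \<and> k < \<Omega> F}"

definition tFi :: "nat \<Rightarrow> (nat set \<Rightarrow> nat) \<Rightarrow> nat \<Rightarrow> (nat set \<times> nat) set" where
  "tFi n \<Omega> i = {x \<in> tF n \<Omega>. i \<in> fst x}"

definition wsc_connected :: "nat \<Rightarrow> (nat set \<Rightarrow> nat) \<Rightarrow> bool" where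
  "wsc_connected n \<Omega> \<longleftrightarrow>
     (\<forall>i\<le>n. \<forall>j\<le>n. (\<lambda>a b. a \<le> n \<and> b \<le> n \<and> (\<exists>F. facet n \<Omega> F \<and> a \<in> F \<and> b \<in> F))\<^sup>*\<^sup>* i j)"

definition wsc_action ::
  "nat \<Rightarrow> (nat set \<Rightarrow> nat) \<Rightarrow> ('g, 'm) monoid_scheme \<Rightarrow> ('g \<Rightarrow> nat \<Rightarrow> nat)
     \<Rightarrow> ('g \<Rightarrow> nat set \<times> nat \<Rightarrow> nat set \<times> nat) \<Rightarrow> bool" where
  "wsc_action n \<Omega> G \<sigma> \<tau> \<longleftrightarrow>
     group_action G {..n} \<sigma> \<and> group_action G (tF n \<Omega>) \<tau> \<and>
     (\<forall>g\<in>carrier G. \<forall>S. S \<subseteq> {..n} \<longrightarrow> \<Omega> (\<sigma> g ` S) = \<Omega> S) \<and>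
     (\<forall>g\<in>carrier G. \<forall>x\<in>tF n \<Omega>. fst (\<tau> g x) = \<sigma> g ` fst x)"

definition free_wsc_action ::
  "nat \<Rightarrow> (nat set \<Rightarrow> nat) \<Rightarrow> ('g, 'm) monoid_scheme \<Rightarrow> ('g \<Rightarrow> nat \<Rightarrow> nat)
     \<Rightarrow> ('g \<Rightarrow> nat set \<times> nat \<Rightarrow> nat set \<times> nat) \<Rightarrow> bool" where
  "free_wsc_action n \<Omega> G \<sigma> \<tau> \<longleftrightarrow> wsc_action n \<Omega> G \<sigma> \<tau> \<and>
     (\<forall>g\<in>carrier G. \<forall>x\<in>tF n \<Omega>. \<tau> g x = x \<longrightarrow> g = \<one>\<^bsub>G\<^esub>)"

definition vsp :: "'b set \<Rightarrow> ('b \<Rightarrow> complex) set" where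
  "vsp B = {w. finite {b. w b \<noteq> 0} \<and> {b. w b \<noteq> 0} \<subseteq> B}"

text \<open>V_0 (x) ... (x) V_n, with V_i = vsp (B i): finitely supported functions on the product basis.\<close>
definition tensor_sp :: "nat \<Rightarrow> (nat \<Rightarrow> 'b set) \<Rightarrow> ((nat \<Rightarrow> 'b) \<Rightarrow> complex) set" where
  "tensor_sp n B = {v. finite {x. v x \<noteq> 0} \<and> {x. v x \<noteq> 0} \<subseteq> PiE {..n} B}"

definition etensor :: "nat \<Rightarrow> (nat \<Rightarrow> 'b \<Rightarrow> complex) \<Rightarrow> (nat \<Rightarrow> 'b) \<Rightarrow> complex" where
  "etensor n w x = (if x \<in> extensional {..n} then (\<Prod>i\<le>n. w i (x i)) else 0)"

definition G_invariant ::
  "nat \<Rightarrow> ('g, 'm) monoid_scheme \<Rightarrow> ('g \<Rightarrow> nat \<Rightarrow> nat) \<Rightarrow> (nat \<Rightarrow> 'b set)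
     \<Rightarrow> ((nat \<Rightarrow> 'b) \<Rightarrow> complex) \<Rightarrow> bool" where
  "G_invariant n G \<sigma> B v \<longleftrightarrow>
     (\<forall>g\<in>carrier G. \<forall>x\<in>PiE {..n} B. v (restrict (\<lambda>i. x (\<sigma> g i)) {..n}) = v x)"

definition is_OG_decomp ::
  "nat \<Rightarrow> (nat set \<Rightarrow> nat) \<Rightarrow> ('g, 'm) monoid_scheme \<Rightarrow> ('g \<Rightarrow> nat \<Rightarrow> nat)
     \<Rightarrow> ('g \<Rightarrow> nat set \<times> nat \<Rightarrow> nat set \<times> nat) \<Rightarrow> (nat \<Rightarrow> 'b set)
     \<Rightarrow> ((nat \<Rightarrow> 'b) \<Rightarrow> complex) \<Rightarrow> nat set
     \<Rightarrow> (nat \<Rightarrow> (nat set \<times> nat \<Rightarrow> nat) \<Rightarrow> 'b \<Rightarrow> complex) \<Rightarrow> bool" where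
  "is_OG_decomp n \<Omega> G \<sigma> \<tau> B v I loc \<longleftrightarrow>
     finite I \<and>
     (\<forall>i\<le>n. \<forall>\<beta>\<in>tFi n \<Omega> i \<rightarrow>\<^sub>E I. loc i \<beta> \<in> vsp (B i)) \<and>
     v = (\<Sum>\<alpha>\<in>tF n \<Omega> \<rightarrow>\<^sub>E I. etensor n (\<lambda>i. loc i (restrict \<alpha> (tFi n \<Omega> i)))) \<and>
     (\<forall>i\<le>n. \<forall>g\<in>carrier G. \<forall>\<beta>\<in>tFi n \<Omega> i \<rightarrow>\<^sub>E I.
        loc i \<beta> = loc (\<sigma> g i) (restrict (\<lambda>x. \<beta> (\<tau> (inv\<^bsub>G\<^esub> g) x)) (tFi n \<Omega> (\<sigma> g i))))"

definition rank_OG ::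
  "nat \<Rightarrow> (nat set \<Rightarrow> nat) \<Rightarrow> ('g, 'm) monoid_scheme \<Rightarrow> ('g \<Rightarrow> nat \<Rightarrow> nat)
     \<Rightarrow> ('g \<Rightarrow> nat set \<times> nat \<Rightarrow> nat set \<times> nat) \<Rightarrow> (nat \<Rightarrow> 'b set)
     \<Rightarrow> ((nat \<Rightarrow> 'b) \<Rightarrow> complex) \<Rightarrow> enat" where
  "rank_OG n \<Omega> G \<sigma> \<tau> B v =
     (if \<exists>I loc. is_OG_decomp n \<Omega> G \<sigma> \<tau> B v I loc
      then enat (LEAST k. \<exists>I loc. is_OG_decomp n \<Omega> G \<sigma> \<tau> B v I loc \<and> card I = k)
      else \<infinity>)"

end

theory Submission imports Defs begin

lemma sum_fun_apply: "(\<Sum>i\<in>A. f i) x = (\<Sum>i\<in>A. f i x)"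
  by (induction A rule: infinite_finite_induct) auto

locale Sx =
  fixes n :: nat and \<Omega> :: "nat set \<Rightarrow> nat" and G :: "('g, 'm) monoid_scheme"
    and \<sigma> :: "'g \<Rightarrow> nat \<Rightarrow> nat" and \<tau> :: "'g \<Rightarrow> nat set \<times> nat \<Rightarrow> nat set \<times> nat"
  assumes wsc: "wsc n \<Omega>" and conn: "wsc_connected n \<Omega>"
    and fr: "free_wsc_action n \<Omega> G \<sigma> \<tau>"
begin

abbreviation "T \<equiv> tF n \<Omega>"
abbreviation "Ti \<equiv> tFi n \<Omega>"

lemma sa: "group_action G {..n} \<sigma>" and ta: "group_action G T \<tau>"
  and tau_fst: "\<And>g x. g \<in> carrier G \<Longrightarrow> x \<in> T \<Longrightarrow> fst (\<tau> g x) = \<sigma> g ` fst x"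
  and free: "\<And>g x. g \<in> carrier G \<Longrightarrow> x \<in> T \<Longrightarrow> \<tau> g x = x \<Longrightarrow> g = \<one>\<^bsub>G\<^esub>"
  using fr unfolding free_wsc_action_def wsc_action_def by auto

lemma grp: "group G"
  using sa unfolding group_action_def group_hom_def group_hom_axioms_def by auto

lemma sig_le: "g \<in> carrier G \<Longrightarrow> i \<le> n \<Longrightarrow> \<sigma> g i \<le> n"
  using group_action.element_image[OF sa] by blast

lemma tau_T: "g \<in> carrier G \<Longrightarrow> x \<in> T \<Longrightarrow> \<tau> g x \<in> T"
  using group_action.element_image[OF ta] by blast

lemma sig_comp: "g \<in> carrier G \<Longrightarrow> h \<in> carrier G \<Longrightarrow> i \<le> n \<Longrightarrow> \<sigma> (g \<otimes>\<^bsub>G\<^esub> h) i = \<sigma> g (\<sigma> h i)"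
  using group_action.composition_rule[OF sa] by blast

lemma tau_comp: "g \<in> carrier G \<Longrightarrow> h \<in> carrier G \<Longrightarrow> x \<in> T \<Longrightarrow> \<tau> (g \<otimes>\<^bsub>G\<^esub> h) x = \<tau> g (\<tau> h x)"
  using group_action.composition_rule[OF ta] by blast

lemma sig_one: "i \<le> n \<Longrightarrow> \<sigma> \<one>\<^bsub>G\<^esub> i = i"
proof -
  assume "i \<le> n"
  have "(\<lambda>x \<in> {..n}. x) i = \<sigma> \<one>\<^bsub>G\<^esub> i" using group_action.id_eq_one[OF sa] by simp
  then show ?thesis using \<open>i \<le> n\<close> by simp
qed

lemma tau_one: "x \<in> T \<Longrightarrow> \<tau> \<one>\<^bsub>G\<^esub> x = x"
proof -
  assume "x \<in> T"
  have "(\<lambda>x \<in> T. x) x = \<tau> \<one>\<^bsub>G\<^esub> x" using group_action.id_eq_one[OF ta] by simp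
  then show ?thesis using \<open>x \<in> T\<close> by simp
qed

lemma inv_c: "g \<in> carrier G \<Longrightarrow> inv\<^bsub>G\<^esub> g \<in> carrier G"
  using grp by (simp add: group.inv_closed)
lemma m_c: "g \<in> carrier G \<Longrightarrow> h \<in> carrier G \<Longrightarrow> g \<otimes>\<^bsub>G\<^esub> h \<in> carrier G"
  using grp by (simp add: group.is_monoid monoid.m_closed)
lemma one_c: "\<one>\<^bsub>G\<^esub> \<in> carrier G"
  using grp by (simp add: group.is_monoid monoid.one_closed)
lemma linv: "g \<in> carrier G \<Longrightarrow> inv\<^bsub>G\<^esub> g \<otimes>\<^bsub>G\<^esub> g = \<one>\<^bsub>G\<^esub>"
  using grp by (simp add: group.l_inv)
lemma rinv: "g \<in> carrier G \<Longrightarrow> g \<otimes>\<^bsub>G\<^esub> inv\<^bsub>G\<^esub> g = \<one>\<^bsub>G\<^esub>"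
  using grp by (simp add: group.r_inv)

lemma sig_inv: "g \<in> carrier G \<Longrightarrow> i \<le> n \<Longrightarrow> \<sigma> (inv\<^bsub>G\<^esub> g) (\<sigma> g i) = i"
  using sig_comp[of "inv\<^bsub>G\<^esub> g" g i] inv_c linv sig_one by simp

lemma sig_inv2: "g \<in> carrier G \<Longrightarrow> i \<le> n \<Longrightarrow> \<sigma> g (\<sigma> (inv\<^bsub>G\<^esub> g) i) = i"
  using sig_comp[of g "inv\<^bsub>G\<^esub> g" i] inv_c rinv sig_one by simp

lemma tau_inv: "g \<in> carrier G \<Longrightarrow> x \<in> T \<Longrightarrow> \<tau> (inv\<^bsub>G\<^esub> g) (\<tau> g x) = x"
  using tau_comp[of "inv\<^bsub>G\<^esub> g" g x] inv_c linv tau_one by simp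

lemma tau_inv2: "g \<in> carrier G \<Longrightarrow> x \<in> T \<Longrightarrow> \<tau> g (\<tau> (inv\<^bsub>G\<^esub> g) x) = x"
  using tau_comp[of g "inv\<^bsub>G\<^esub> g" x] inv_c rinv tau_one by simp

lemma tau_Ti: "g \<in> carrier G \<Longrightarrow> x \<in> Ti i \<Longrightarrow> \<tau> g x \<in> Ti (\<sigma> g i)"
  unfolding tFi_def using tau_T tau_fst by auto

lemma free_inj: assumes "a \<in> carrier G" "b \<in> carrier G" "x \<in> T" "\<tau> a x = \<tau> b x" shows "a = b"
proof -
  have "\<tau> (inv\<^bsub>G\<^esub> b \<otimes>\<^bsub>G\<^esub> a) x = x"
    using assms tau_comp[of "inv\<^bsub>G\<^esub> b" a x] inv_c tau_inv by simp
  then have "inv\<^bsub>G\<^esub> b \<otimes>\<^bsub>G\<^esub> a = \<one>\<^bsub>G\<^esub>"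
    using free assms m_c inv_c by blast
  then have "inv\<^bsub>G\<^esub> a = inv\<^bsub>G\<^esub> b" using assms grp group.inv_equality inv_c by metis
  then show ?thesis using assms grp group.inv_inv by metis
qed

lemma facet_exists: assumes "simplex n \<Omega> S" shows "\<exists>F. facet n \<Omega> F \<and> S \<subseteq> F"
proof -
  define A where "A = {U. simplex n \<Omega> U \<and> S \<subseteq> U}"
  have "A \<subseteq> Pow {..n}" unfolding A_def simplex_def by blast
  then have fin: "finite A" by (rule finite_subset) simp
  have ne: "A \<noteq> {}" using assms unfolding A_def by blast
  obtain m where m: "m \<in> A" and mx: "\<forall>b\<in>A. m \<le> b \<longrightarrow> m = b"
    using finite_has_maximal[OF fin ne] by blast
  have "facet n \<Omega> m" unfolding facet_def
  proof (intro conjI allI impI)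
    show "simplex n \<Omega> m" using m unfolding A_def by blast
    fix U assume "simplex n \<Omega> U \<and> m \<subseteq> U"
    moreover then have "U \<in> A" using m unfolding A_def by blast
    ultimately show "U = m" using mx by blast
  qed
  then show ?thesis using m unfolding A_def by blast
qed

lemma facet_ne: "facet n \<Omega> F \<Longrightarrow> F \<noteq> {}"
proof
  assume "facet n \<Omega> F" "F = {}"
  moreover have "simplex n \<Omega> {0}" using wsc unfolding wsc_def simplex_def by auto
  ultimately show False unfolding facet_def by blast
qed

lemma T_fin: "finite T"
proof (rule finite_subset)
  show "T \<subseteq> (SIGMA F:Pow {..n}. {..<\<Omega> F})"
    unfolding tF_def facet_def simplex_def by auto
qed auto

lemma Ti_ne: assumes "i \<le> n" shows "Ti i \<noteq> {}"
proof -
  have "simplex n \<Omega> {i}" using wsc assms unfolding wsc_def simplex_def by auto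
  then obtain F where F: "facet n \<Omega> F" "{i} \<subseteq> F" using facet_exists by blast
  then have "(F, 0) \<in> Ti i" unfolding tFi_def tF_def facet_def simplex_def by auto
  then show ?thesis by auto
qed

lemma T_ne: "T \<noteq> {}" using Ti_ne[of 0] unfolding tFi_def by auto

lemma G_fin: "finite (carrier G)"
proof -
  obtain x where x: "x \<in> T" using T_ne by auto
  have "inj_on (\<lambda>g. \<tau> g x) (carrier G)" using free_inj x by (meson inj_onI)
  moreover have "(\<lambda>g. \<tau> g x) ` carrier G \<subseteq> T" using tau_T[OF _ x] by blast
  ultimately show ?thesis using T_fin by (meson finite_subset inj_on_finite)
qed

definition "rep x = (SOME y. y \<in> T \<and> (\<exists>g\<in>carrier G. \<tau> g y = x))"
definition "crd x = (THE g. g \<in> carrier G \<and> \<tau> g (rep x) = x)"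

lemma rep_ex: "x \<in> T \<Longrightarrow> rep x \<in> T \<and> (\<exists>g\<in>carrier G. \<tau> g (rep x) = x)"
proof -
  assume x: "x \<in> T"
  have "x \<in> T \<and> (\<exists>g\<in>carrier G. \<tau> g x = x)" using x tau_one[OF x] one_c by blast
  then show ?thesis unfolding rep_def by (rule someI)
qed

lemma crd: assumes "x \<in> T" shows "crd x \<in> carrier G" "\<tau> (crd x) (rep x) = x"
proof -
  have "\<exists>!g. g \<in> carrier G \<and> \<tau> g (rep x) = x"
  proof -
    obtain g where g: "g \<in> carrier G" "\<tau> g (rep x) = x" using rep_ex[OF assms] by blast
    have "\<And>h. h \<in> carrier G \<and> \<tau> h (rep x) = x \<Longrightarrow> h = g"
      using free_inj[of _ g "rep x"] g rep_ex[OF assms] by metis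
    then show ?thesis using g by blast
  qed
  from theI'[OF this] show "crd x \<in> carrier G" "\<tau> (crd x) (rep x) = x"
    unfolding crd_def by auto
qed

lemma rep_tau: assumes "g \<in> carrier G" "x \<in> T" shows "rep (\<tau> g x) = rep x"
proof -
  have "(\<lambda>y. y \<in> T \<and> (\<exists>h\<in>carrier G. \<tau> h y = \<tau> g x)) = (\<lambda>y. y \<in> T \<and> (\<exists>h\<in>carrier G. \<tau> h y = x))"
  proof (intro ext iffI)
    fix y assume "y \<in> T \<and> (\<exists>h\<in>carrier G. \<tau> h y = \<tau> g x)"
    then obtain h where "y \<in> T" "h \<in> carrier G" "\<tau> h y = \<tau> g x" by auto
    then have "\<tau> (inv\<^bsub>G\<^esub> g \<otimes>\<^bsub>G\<^esub> h) y = x" using assms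
      tau_comp[of "inv\<^bsub>G\<^esub> g" h y] inv_c tau_inv by simp
    moreover have "inv\<^bsub>G\<^esub> g \<otimes>\<^bsub>G\<^esub> h \<in> carrier G" using m_c inv_c assms \<open>h \<in> carrier G\<close> by blast
    ultimately show "y \<in> T \<and> (\<exists>h\<in>carrier G. \<tau> h y = x)" using \<open>y \<in> T\<close> by blast
  next
    fix y assume "y \<in> T \<and> (\<exists>h\<in>carrier G. \<tau> h y = x)"
    then obtain h where "y \<in> T" "h \<in> carrier G" "\<tau> h y = x" by auto
    then have "\<tau> (g \<otimes>\<^bsub>G\<^esub> h) y = \<tau> g x" using assms tau_comp by auto
    moreover have "g \<otimes>\<^bsub>G\<^esub> h \<in> carrier G" using m_c assms \<open>h \<in> carrier G\<close> by blast
    ultimately show "y \<in> T \<and> (\<exists>h\<in>carrier G. \<tau> h y = \<tau> g x)" using \<open>y \<in> T\<close> by blast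
  qed
  then show ?thesis unfolding rep_def by simp
qed

lemma crd_tau: assumes "g \<in> carrier G" "x \<in> T" shows "crd (\<tau> g x) = g \<otimes>\<^bsub>G\<^esub> crd x"
proof (rule free_inj)
  show "crd (\<tau> g x) \<in> carrier G" using crd tau_T assms by blast
  show "g \<otimes>\<^bsub>G\<^esub> crd x \<in> carrier G" using crd(1)[OF assms(2)] assms m_c by blast
  show "rep x \<in> T" using rep_ex assms by blast
  show "\<tau> (crd (\<tau> g x)) (rep x) = \<tau> (g \<otimes>\<^bsub>G\<^esub> crd x) (rep x)"
  proof -
    have "\<tau> (crd (\<tau> g x)) (rep x) = \<tau> g x" using crd[OF tau_T[OF assms]] rep_tau[OF assms] by simp
    also have "\<dots> = \<tau> g (\<tau> (crd x) (rep x))" using crd[OF assms(2)] by simp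
    also have "\<dots> = \<tau> (g \<otimes>\<^bsub>G\<^esub> crd x) (rep x)" using tau_comp crd(1)[OF assms(2)] assms rep_ex by simp
    finally show ?thesis .
  qed
qed

end

locale Sy = Sx +
  fixes B :: "nat \<Rightarrow> 'bb set" and v :: "(nat \<Rightarrow> 'bb) \<Rightarrow> complex"
    and J :: "'jj set" and w :: "'jj \<Rightarrow> nat \<Rightarrow> 'bb \<Rightarrow> complex" and d :: "_ \<Rightarrow> nat"
  assumes Binv: "\<forall>g\<in>carrier G. \<forall>i\<le>n. B (\<sigma> g i) = B i"
    and vT: "v \<in> tensor_sp n B" and vinv: "G_invariant n G \<sigma> B v"
    and Jfin: "finite J" and wv: "\<forall>j\<in>J. \<forall>i\<le>n. w j i \<in> vsp (B i)"
    and vsum: "v = (\<Sum>j\<in>J. etensor n (w j))"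
    and dinj: "inj_on d (J \<times> carrier G)"
begin

definition "P = J \<times> carrier G"
definition "I = d ` P"
definition "lab p x = d (fst p, snd p \<otimes>\<^bsub>G\<^esub> crd x)"
definition "Cns i = (\<lambda>p. restrict (lab p) (Ti i)) ` P"
definition "x0 i = (SOME x. x \<in> Ti i)"
definition "dec l = inv_into P d l"
definition "c = root (Suc n) (1 / real (card (carrier G)))"
definition "loc i \<beta> = (if \<beta> \<in> Cns i then
   (\<lambda>b. complex_of_real c * w (fst (dec (\<beta> (x0 i)))) (\<sigma> (snd (dec (\<beta> (x0 i))) \<otimes>\<^bsub>G\<^esub> inv\<^bsub>G\<^esub> (crd (x0 i))) i) b)
   else (\<lambda>b. 0))"

lemma x0_in: "i \<le> n \<Longrightarrow> x0 i \<in> Ti i"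
  unfolding x0_def using Ti_ne by (simp add: some_in_eq)

lemma Ti_sub: "Ti i \<subseteq> T" unfolding tFi_def by blast

lemma lab_P: "p \<in> P \<Longrightarrow> x \<in> T \<Longrightarrow> (fst p, snd p \<otimes>\<^bsub>G\<^esub> crd x) \<in> P"
proof -
  assume "p \<in> P" "x \<in> T"
  then show ?thesis unfolding P_def using m_c[of "snd p" "crd x"] crd(1)[of x] by (auto simp: mem_Times_iff)
qed

lemma lab_I: "p \<in> P \<Longrightarrow> x \<in> T \<Longrightarrow> lab p x \<in> I"
  unfolding I_def lab_def using lab_P by blast

lemma lab_inj: assumes "p \<in> P" "q \<in> P" "x \<in> T" "lab p x = lab q x" shows "p = q"
proof -
  have "(fst p, snd p \<otimes>\<^bsub>G\<^esub> crd x) = (fst q, snd q \<otimes>\<^bsub>G\<^esub> crd x)"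
    using dinj lab_P[OF assms(1,3)] lab_P[OF assms(2,3)] assms(4) unfolding lab_def P_def inj_on_def by blast
  then have "fst p = fst q" "snd p \<otimes>\<^bsub>G\<^esub> crd x = snd q \<otimes>\<^bsub>G\<^esub> crd x" by auto
  moreover have "snd p \<in> carrier G" "snd q \<in> carrier G" using assms unfolding P_def by auto
  ultimately have "snd p = snd q" using grp crd(1)[OF assms(3)] group.right_cancel by metis
  then show ?thesis using \<open>fst p = fst q\<close> by (simp add: prod_eq_iff)
qed

lemma loc_cons: assumes "p \<in> P" "i \<le> n"
  shows "loc i (restrict (lab p) (Ti i)) = (\<lambda>b. complex_of_real c * w (fst p) (\<sigma> (snd p) i) b)"
proof -
  have x: "x0 i \<in> Ti i" "x0 i \<in> T" using x0_in[OF assms(2)] Ti_sub by auto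
  have cons: "restrict (lab p) (Ti i) \<in> Cns i" unfolding Cns_def using assms by blast
  have "dec (restrict (lab p) (Ti i) (x0 i)) = (fst p, snd p \<otimes>\<^bsub>G\<^esub> crd (x0 i))"
    unfolding dec_def lab_def using x lab_P[OF assms(1) x(2)] dinj unfolding P_def
    by (simp add: inv_into_f_f)
  moreover have "snd p \<otimes>\<^bsub>G\<^esub> crd (x0 i) \<otimes>\<^bsub>G\<^esub> inv\<^bsub>G\<^esub> (crd (x0 i)) = snd p"
  proof -
    have "snd p \<in> carrier G" using assms unfolding P_def by auto
    then show ?thesis using group.inv_solve_right'[OF grp, of "snd p" "snd p \<otimes>\<^bsub>G\<^esub> crd (x0 i)" "crd (x0 i)"]
      crd(1)[OF x(2)] m_c by simp
  qed
  ultimately show ?thesis unfolding loc_def using cons by simp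
qed


lemma P_mult: "p \<in> P \<Longrightarrow> g \<in> carrier G \<Longrightarrow> (fst p, snd p \<otimes>\<^bsub>G\<^esub> g) \<in> P"
  unfolding P_def using m_c by (auto simp: mem_Times_iff)

lemma P_snd: "p \<in> P \<Longrightarrow> snd p \<in> carrier G" and P_fst: "p \<in> P \<Longrightarrow> fst p \<in> J"
  unfolding P_def by (auto simp: mem_Times_iff)

lemma cns_fwd: assumes "p \<in> P" "i \<le> n" "g \<in> carrier G"
  shows "restrict (\<lambda>x. restrict (lab p) (Ti i) (\<tau> (inv\<^bsub>G\<^esub> g) x)) (Ti (\<sigma> g i))
       = restrict (lab (fst p, snd p \<otimes>\<^bsub>G\<^esub> inv\<^bsub>G\<^esub> g)) (Ti (\<sigma> g i))"
proof (rule ext)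
  fix x
  show "restrict (\<lambda>x. restrict (lab p) (Ti i) (\<tau> (inv\<^bsub>G\<^esub> g) x)) (Ti (\<sigma> g i)) x
       = restrict (lab (fst p, snd p \<otimes>\<^bsub>G\<^esub> inv\<^bsub>G\<^esub> g)) (Ti (\<sigma> g i)) x"
  proof (cases "x \<in> Ti (\<sigma> g i)")
    case True
    then have xT: "x \<in> T" using Ti_sub by blast
    have "\<tau> (inv\<^bsub>G\<^esub> g) x \<in> Ti (\<sigma> (inv\<^bsub>G\<^esub> g) (\<sigma> g i))" using tau_Ti[OF inv_c[OF assms(3)] True] .
    then have y: "\<tau> (inv\<^bsub>G\<^esub> g) x \<in> Ti i" using sig_inv[OF assms(3,2)] by simp
    have "crd (\<tau> (inv\<^bsub>G\<^esub> g) x) = inv\<^bsub>G\<^esub> g \<otimes>\<^bsub>G\<^esub> crd x" using crd_tau[OF inv_c[OF assms(3)] xT] .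
    moreover have "snd p \<otimes>\<^bsub>G\<^esub> (inv\<^bsub>G\<^esub> g \<otimes>\<^bsub>G\<^esub> crd x) = snd p \<otimes>\<^bsub>G\<^esub> inv\<^bsub>G\<^esub> g \<otimes>\<^bsub>G\<^esub> crd x"
      using grp P_snd[OF assms(1)] inv_c[OF assms(3)] crd(1)[OF xT] by (simp add: group.is_monoid monoid.m_assoc)
    ultimately show ?thesis using True y unfolding lab_def by simp
  next
    case False
    then show ?thesis by simp
  qed
qed

lemma cns_back: assumes "\<beta> \<in> Ti i \<rightarrow>\<^sub>E I" "i \<le> n" "g \<in> carrier G" "q \<in> P"
  "restrict (\<lambda>x. \<beta> (\<tau> (inv\<^bsub>G\<^esub> g) x)) (Ti (\<sigma> g i)) = restrict (lab q) (Ti (\<sigma> g i))"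
  shows "\<beta> = restrict (lab (fst q, snd q \<otimes>\<^bsub>G\<^esub> g)) (Ti i)"
proof (rule ext)
  fix y
  show "\<beta> y = restrict (lab (fst q, snd q \<otimes>\<^bsub>G\<^esub> g)) (Ti i) y"
  proof (cases "y \<in> Ti i")
    case True
    then have yT: "y \<in> T" using Ti_sub by blast
    have x: "\<tau> g y \<in> Ti (\<sigma> g i)" using tau_Ti[OF assms(3) True] .
    have "\<beta> y = \<beta> (\<tau> (inv\<^bsub>G\<^esub> g) (\<tau> g y))" by (simp only: tau_inv[OF assms(3) yT])
    also have "\<dots> = lab q (\<tau> g y)"
    proof -
      have "restrict (\<lambda>x. \<beta> (\<tau> (inv\<^bsub>G\<^esub> g) x)) (Ti (\<sigma> g i)) (\<tau> g y) = restrict (lab q) (Ti (\<sigma> g i)) (\<tau> g y)"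
        using assms(5) by (rule arg_cong)
      then show ?thesis unfolding restrict_apply' [OF x] .
    qed
    also have "\<dots> = d (fst q, snd q \<otimes>\<^bsub>G\<^esub> (g \<otimes>\<^bsub>G\<^esub> crd y))" unfolding lab_def using crd_tau[OF assms(3) yT] by simp
    also have "\<dots> = lab (fst q, snd q \<otimes>\<^bsub>G\<^esub> g) y" unfolding lab_def
      using grp P_snd[OF assms(4)] assms(3) crd(1)[OF yT] by (simp add: group.is_monoid monoid.m_assoc)
    finally show ?thesis using True by simp
  next
    case False
    have "\<beta> y = undefined" using PiE_arb[OF assms(1) False] .
    then show ?thesis using False by simp
  qed
qed

lemma loc_equiv: assumes "i \<le> n" "g \<in> carrier G" "\<beta> \<in> Ti i \<rightarrow>\<^sub>E I"
  shows "loc i \<beta> = loc (\<sigma> g i) (restrict (\<lambda>x. \<beta> (\<tau> (inv\<^bsub>G\<^esub> g) x)) (Ti (\<sigma> g i)))"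
proof (cases "\<beta> \<in> Cns i")
  case True
  then obtain p where p: "p \<in> P" "\<beta> = restrict (lab p) (Ti i)" unfolding Cns_def by blast
  have gi: "\<sigma> g i \<le> n" using sig_le assms by blast
  have eq0: "loc i \<beta> = (\<lambda>b. complex_of_real c * w (fst p) (\<sigma> (snd p) i) b)"
    using loc_cons[OF p(1) assms(1)] p(2) by simp
  have "loc (\<sigma> g i) (restrict (\<lambda>x. \<beta> (\<tau> (inv\<^bsub>G\<^esub> g) x)) (Ti (\<sigma> g i)))
      = loc (\<sigma> g i) (restrict (lab (fst p, snd p \<otimes>\<^bsub>G\<^esub> inv\<^bsub>G\<^esub> g)) (Ti (\<sigma> g i)))"
    using cns_fwd[OF p(1) assms(1,2)] p(2) by simp
  also have "\<dots> = (\<lambda>b. complex_of_real c * w (fst p) (\<sigma> (snd p \<otimes>\<^bsub>G\<^esub> inv\<^bsub>G\<^esub> g) (\<sigma> g i)) b)"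
    using loc_cons[OF P_mult[OF p(1) inv_c[OF assms(2)]] gi] by simp
  also have "\<sigma> (snd p \<otimes>\<^bsub>G\<^esub> inv\<^bsub>G\<^esub> g) (\<sigma> g i) = \<sigma> (snd p) i"
    using sig_comp[OF P_snd[OF p(1)] inv_c[OF assms(2)] gi] sig_inv[OF assms(2,1)] by simp
  finally show ?thesis by (rule trans[OF eq0 sym])
next
  case False
  have "restrict (\<lambda>x. \<beta> (\<tau> (inv\<^bsub>G\<^esub> g) x)) (Ti (\<sigma> g i)) \<notin> Cns (\<sigma> g i)"
  proof
    assume "restrict (\<lambda>x. \<beta> (\<tau> (inv\<^bsub>G\<^esub> g) x)) (Ti (\<sigma> g i)) \<in> Cns (\<sigma> g i)"
    then obtain q where "q \<in> P" "restrict (\<lambda>x. \<beta> (\<tau> (inv\<^bsub>G\<^esub> g) x)) (Ti (\<sigma> g i)) = restrict (lab q) (Ti (\<sigma> g i))"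
      unfolding Cns_def by blast
    then have "\<beta> = restrict (lab (fst q, snd q \<otimes>\<^bsub>G\<^esub> g)) (Ti i)" using cns_back assms by blast
    then have "\<beta> \<in> Cns i" unfolding Cns_def using P_mult[OF \<open>q \<in> P\<close> assms(2)] by blast
    then show False using False by blast
  qed
  then show ?thesis using False unfolding loc_def by simp
qed

lemma vsp_scale: "f \<in> vsp A \<Longrightarrow> (\<lambda>b. a * f b) \<in> vsp A"
proof -
  assume f: "f \<in> vsp A"
  have "{b. a * f b \<noteq> 0} \<subseteq> {b. f b \<noteq> 0}" by auto
  then show ?thesis using f unfolding vsp_def using finite_subset by blast
qed

lemma loc_vsp: assumes "i \<le> n" shows "loc i \<beta> \<in> vsp (B i)"
proof (cases "\<beta> \<in> Cns i")
  case True
  then obtain p where p: "p \<in> P" "\<beta> = restrict (lab p) (Ti i)" unfolding Cns_def by blast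
  have k: "\<sigma> (snd p) i \<le> n" using sig_le P_snd[OF p(1)] assms by blast
  have "w (fst p) (\<sigma> (snd p) i) \<in> vsp (B (\<sigma> (snd p) i))" using wv P_fst[OF p(1)] k by blast
  then have "w (fst p) (\<sigma> (snd p) i) \<in> vsp (B i)" using Binv P_snd[OF p(1)] assms by metis
  then show ?thesis using loc_cons[OF p(1) assms] p(2) vsp_scale by simp
next
  case False
  then show ?thesis unfolding loc_def vsp_def by simp
qed

lemma glob: assumes "\<alpha> \<in> T \<rightarrow>\<^sub>E I" "\<forall>i\<le>n. restrict \<alpha> (Ti i) \<in> Cns i"
  shows "\<exists>p\<in>P. \<alpha> = restrict (lab p) T"
proof -
  define pf where "pf i = (SOME p. p \<in> P \<and> restrict \<alpha> (Ti i) = restrict (lab p) (Ti i))" for i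
  have pf: "pf i \<in> P \<and> restrict \<alpha> (Ti i) = restrict (lab (pf i)) (Ti i)" if "i \<le> n" for i
  proof -
    have "\<exists>p. p \<in> P \<and> restrict \<alpha> (Ti i) = restrict (lab p) (Ti i)"
      using assms(2) that unfolding Cns_def by blast
    then show ?thesis unfolding pf_def by (rule someI_ex)
  qed
  have val: "\<alpha> x = lab (pf i) x" if "i \<le> n" "x \<in> Ti i" for i x
  proof -
    have "restrict \<alpha> (Ti i) x = restrict (lab (pf i)) (Ti i) x" using pf[OF that(1)] by simp
    then show ?thesis using that(2) by simp
  qed
  have adj: "pf a = pf b" if "a \<le> n" "b \<le> n" "facet n \<Omega> F" "a \<in> F" "b \<in> F" for a b F
  proof -
    have "\<Omega> F \<noteq> 0" using that(3) unfolding facet_def simplex_def by blast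
    then have x: "(F, 0) \<in> T" using that(3) unfolding tF_def by simp
    then have "(F, 0) \<in> Ti a" "(F, 0) \<in> Ti b" using that(4,5) unfolding tFi_def by auto
    then have "lab (pf a) (F, 0) = lab (pf b) (F, 0)" using val that(1,2) by metis
    then show ?thesis using lab_inj pf that(1,2) x by blast
  qed
  have all: "pf j = pf 0" if "j \<le> n" for j
  proof -
    let ?R = "\<lambda>a b. a \<le> n \<and> b \<le> n \<and> (\<exists>F. facet n \<Omega> F \<and> a \<in> F \<and> b \<in> F)"
    have "?R\<^sup>*\<^sup>* 0 j" using conn that unfolding wsc_connected_def by blast
    then show ?thesis
    proof (induction rule: rtranclp_induct)
      case base
      then show ?case by simp
    next
      case (step y z)
      then show ?case using adj by metis
    qed
  qed
  have "\<alpha> = restrict (lab (pf 0)) T"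
  proof (rule ext)
    fix x
    show "\<alpha> x = restrict (lab (pf 0)) T x"
    proof (cases "x \<in> T")
      case True
      then have fx: "facet n \<Omega> (fst x)" unfolding tF_def by auto
      then obtain i where i: "i \<in> fst x" using facet_ne by blast
      have "i \<le> n" using fx i unfolding facet_def simplex_def by blast
      moreover have "x \<in> Ti i" using True i unfolding tFi_def by blast
      ultimately have "\<alpha> x = lab (pf 0) x" using val all by metis
      then show ?thesis using True by simp
    next
      case False
      have "\<alpha> x = undefined" using PiE_arb[OF assms(1) False] .
      then show ?thesis using False by simp
    qed
  qed
  moreover have "pf 0 \<in> P" using pf by blast
  ultimately show ?thesis by blast
qed

lemma etensor_zero: assumes "i \<le> n" "f i = (\<lambda>b. 0)" shows "etensor n f = 0"
proof (rule ext)
  fix x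
  have "f i (x i) = 0" using assms(2) by simp
  then have "\<exists>k\<in>{..n}. f k (x k) = 0" using assms(1) by blast
  then have "(\<Prod>k\<le>n. f k (x k)) = 0" by (intro prod_zero) auto
  then show "etensor n f x = 0 x" unfolding etensor_def by simp
qed

lemma etensor_cong: assumes "\<And>i. i \<le> n \<Longrightarrow> f i = g i" shows "etensor n f = etensor n g"
proof (rule ext)
  fix x
  have "(\<Prod>i\<le>n. f i (x i)) = (\<Prod>i\<le>n. g i (x i))" by (rule prod.cong) (auto simp: assms)
  then show "etensor n f x = etensor n g x" unfolding etensor_def by simp
qed

lemma sig_bij: "h \<in> carrier G \<Longrightarrow> bij_betw (\<sigma> h) {..n} {..n}"
  using group_action.bij_prop0[OF sa] unfolding Bij_def by blast

lemma v_zero: "y \<notin> PiE {..n} B \<Longrightarrow> v y = 0"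
  using vT unfolding tensor_sp_def by blast

lemma key: assumes h: "h \<in> carrier G"
  shows "(\<Sum>j\<in>J. etensor n (\<lambda>i b. complex_of_real c * w j (\<sigma> h i) b)) y = complex_of_real c ^ Suc n * v y"
proof (cases "y \<in> extensional {..n}")
  case False
  then have "y \<notin> PiE {..n} B" by (auto simp: PiE_def)
  then show ?thesis using False v_zero unfolding sum_fun_apply etensor_def by simp
next
  case True
  define y' where "y' = restrict (\<lambda>k. y (\<sigma> (inv\<^bsub>G\<^esub> h) k)) {..n}"
  have y'e: "y' \<in> extensional {..n}" unfolding y'_def by simp
  have y'h: "y' (\<sigma> h i) = y i" if "i \<le> n" for i
    unfolding y'_def using sig_le[OF h that] sig_inv[OF h that] by simp
  have trm: "etensor n (\<lambda>i b. complex_of_real c * w j (\<sigma> h i) b) y = complex_of_real c ^ Suc n * etensor n (w j) y'" for j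
  proof -
    have "etensor n (\<lambda>i b. complex_of_real c * w j (\<sigma> h i) b) y = (\<Prod>i\<le>n. complex_of_real c * w j (\<sigma> h i) (y i))"
      unfolding etensor_def using True by simp
    also have "\<dots> = complex_of_real c ^ Suc n * (\<Prod>i\<le>n. w j (\<sigma> h i) (y i))"
      by (simp add: prod.distrib)
    also have "(\<Prod>i\<le>n. w j (\<sigma> h i) (y i)) = (\<Prod>i\<le>n. w j (\<sigma> h i) (y' (\<sigma> h i)))"
      using y'h by (intro prod.cong) auto
    also have "\<dots> = (\<Prod>k\<le>n. w j k (y' k))"
      using prod.reindex_bij_betw[OF sig_bij[OF h], of "\<lambda>k. w j k (y' k)"] .
    also have "\<dots> = etensor n (w j) y'" unfolding etensor_def using y'e by simp
    finally show ?thesis .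
  qed
  have "(\<Sum>j\<in>J. etensor n (\<lambda>i b. complex_of_real c * w j (\<sigma> h i) b)) y
      = complex_of_real c ^ Suc n * (\<Sum>j\<in>J. etensor n (w j) y')"
    unfolding sum_fun_apply trm by (simp add: sum_distrib_left)
  also have "(\<Sum>j\<in>J. etensor n (w j) y') = v y'"
    using vsum sum_fun_apply by metis
  also have "v y' = v y"
  proof (cases "y \<in> PiE {..n} B")
    case True
    then show ?thesis using vinv inv_c[OF h] unfolding G_invariant_def y'_def by blast
  next
    case False
    then obtain i where i: "i \<le> n" "y i \<notin> B i" using \<open>y \<in> extensional {..n}\<close> by (auto simp: PiE_def Pi_def)
    have "y' (\<sigma> h i) \<notin> B (\<sigma> h i)" using y'h[OF i(1)] i Binv h by metis
    then have "y' \<notin> PiE {..n} B" using sig_le[OF h i(1)] by (auto simp: PiE_def Pi_def)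
    then show ?thesis using v_zero False by simp
  qed
  finally show ?thesis .
qed

lemma finP: "finite P" unfolding P_def using Jfin G_fin by simp

lemma c_pow: "complex_of_real c ^ Suc n * of_nat (card (carrier G)) = 1"
proof -
  have cp: "card (carrier G) > 0" using G_fin one_c card_gt_0_iff by blast
  have "c ^ Suc n = 1 / real (card (carrier G))" unfolding c_def
    by (rule real_root_pow_pos2) simp_all
  then have "complex_of_real c ^ Suc n = complex_of_real (1 / real (card (carrier G)))"
    by (metis of_real_power)
  then show ?thesis using cp by (simp add: field_simps)
qed

lemma decomp_sum: "v = (\<Sum>\<alpha>\<in>T \<rightarrow>\<^sub>E I. etensor n (\<lambda>i. loc i (restrict \<alpha> (Ti i))))"
proof -
  define E where "E \<alpha> = etensor n (\<lambda>i. loc i (restrict \<alpha> (Ti i)))" for \<alpha>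
  define A where "A = (\<lambda>p. restrict (lab p) T) ` P"
  have finI: "finite I" unfolding I_def using finP by simp
  have finPi: "finite (T \<rightarrow>\<^sub>E I)" using T_fin finI by (simp add: finite_PiE)
  have AS: "A \<subseteq> T \<rightarrow>\<^sub>E I" unfolding A_def using lab_I by auto
  have zero: "E \<alpha> = 0" if aa: "\<alpha> \<in> (T \<rightarrow>\<^sub>E I) - A" for \<alpha>
  proof -
    have "\<not> (\<forall>i\<le>n. restrict \<alpha> (Ti i) \<in> Cns i)"
    proof
      assume "\<forall>i\<le>n. restrict \<alpha> (Ti i) \<in> Cns i"
      moreover have "\<alpha> \<in> T \<rightarrow>\<^sub>E I" using aa by blast
      ultimately obtain p where "p \<in> P" "\<alpha> = restrict (lab p) T" using glob by blast
      then have "\<alpha> \<in> A" unfolding A_def by blast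
      then show False using aa by blast
    qed
    then obtain i where i: "i \<le> n" "restrict \<alpha> (Ti i) \<notin> Cns i" by blast
    then have "loc i (restrict \<alpha> (Ti i)) = (\<lambda>b. 0)" unfolding loc_def by simp
    then show ?thesis unfolding E_def by (rule etensor_zero[OF i(1)])
  qed
  have s1: "sum E (T \<rightarrow>\<^sub>E I) = sum E A"
    by (rule sum.mono_neutral_right[OF finPi AS]) (use zero in blast)
  obtain x where x: "x \<in> T" using T_ne by blast
  have inj: "inj_on (\<lambda>p. restrict (lab p) T) P"
  proof (rule inj_onI)
    fix p q assume "p \<in> P" "q \<in> P" "restrict (lab p) T = restrict (lab q) T"
    then have "restrict (lab p) T x = restrict (lab q) T x" by simp
    then have "lab p x = lab q x" using x by simp
    then show "p = q" using lab_inj \<open>p \<in> P\<close> \<open>q \<in> P\<close> x by blast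
  qed
  have s2: "sum E A = (\<Sum>p\<in>P. E (restrict (lab p) T))"
    unfolding A_def using sum.reindex[OF inj] by simp
  have s3: "E (restrict (lab p) T) = etensor n (\<lambda>i b. complex_of_real c * w (fst p) (\<sigma> (snd p) i) b)"
    if "p \<in> P" for p
  proof -
    have "restrict (restrict (lab p) T) (Ti i) = restrict (lab p) (Ti i)" for i
      using Ti_sub[of i] by (intro ext) (auto simp: restrict_def)
    then show ?thesis unfolding E_def using loc_cons[OF that] by (intro etensor_cong) simp
  qed
  have "(\<Sum>p\<in>P. E (restrict (lab p) T)) = (\<Sum>p\<in>J \<times> carrier G. etensor n (\<lambda>i b. complex_of_real c * w (fst p) (\<sigma> (snd p) i) b))"
    using s3 unfolding P_def by (intro sum.cong) auto
  also have "\<dots> = (\<Sum>j\<in>J. \<Sum>h\<in>carrier G. etensor n (\<lambda>i b. complex_of_real c * w j (\<sigma> h i) b))"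
    by (simp add: sum.cartesian_product split_def)
  also have "\<dots> = (\<Sum>h\<in>carrier G. \<Sum>j\<in>J. etensor n (\<lambda>i b. complex_of_real c * w j (\<sigma> h i) b))"
    by (rule sum.swap)
  also have "\<dots> = v"
  proof (rule ext)
    fix y
    have "(\<Sum>h\<in>carrier G. \<Sum>j\<in>J. etensor n (\<lambda>i b. complex_of_real c * w j (\<sigma> h i) b)) y
        = (\<Sum>h\<in>carrier G. complex_of_real c ^ Suc n * v y)"
      unfolding sum_fun_apply[of _ "carrier G"] using key by (intro sum.cong) auto
    also have "\<dots> = (complex_of_real c ^ Suc n * of_nat (card (carrier G))) * v y" by simp
    also have "\<dots> = v y" using c_pow by simp
    finally show "(\<Sum>h\<in>carrier G. \<Sum>j\<in>J. etensor n (\<lambda>i b. complex_of_real c * w j (\<sigma> h i) b)) y = v y" .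
  qed
  finally show ?thesis using s1 s2 unfolding E_def by simp
qed

lemma main: "\<exists>I loc. is_OG_decomp n \<Omega> G \<sigma> \<tau> B v I loc \<and>
   (\<forall>i\<le>n. \<forall>\<beta>\<in>Ti i \<rightarrow>\<^sub>E I. \<exists>j\<in>J. \<exists>k\<le>n. \<exists>c::real. c \<ge> 0 \<and>
      loc i \<beta> = (\<lambda>b. complex_of_real c * w j k b))"
proof -
  have D: "is_OG_decomp n \<Omega> G \<sigma> \<tau> B v I loc"
    unfolding is_OG_decomp_def
  proof (intro conjI ballI allI impI)
    show "finite I" unfolding I_def using finP by simp
    show "loc i \<beta> \<in> vsp (B i)" if "i \<le> n" for i \<beta> using loc_vsp[OF that] .
    show "v = (\<Sum>\<alpha>\<in>T \<rightarrow>\<^sub>E I. etensor n (\<lambda>i. loc i (restrict \<alpha> (Ti i))))" by (rule decomp_sum)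
    show "loc i \<beta> = loc (\<sigma> g i) (restrict (\<lambda>x. \<beta> (\<tau> (inv\<^bsub>G\<^esub> g) x)) (Ti (\<sigma> g i)))"
      if "i \<le> n" "g \<in> carrier G" "\<beta> \<in> Ti i \<rightarrow>\<^sub>E I" for i g \<beta>
      using loc_equiv[OF that] .
  qed
  have C: "\<forall>i\<le>n. \<forall>\<beta>\<in>Ti i \<rightarrow>\<^sub>E I. \<exists>j\<in>J. \<exists>k\<le>n. \<exists>c::real. c \<ge> 0 \<and>
      loc i \<beta> = (\<lambda>b. complex_of_real c * w j k b)"
  proof (intro allI impI ballI)
    fix i \<beta> assume i: "i \<le> n" and b: "\<beta> \<in> Ti i \<rightarrow>\<^sub>E I"
    show "\<exists>j\<in>J. \<exists>k\<le>n. \<exists>c::real. c \<ge> 0 \<and> loc i \<beta> = (\<lambda>b. complex_of_real c * w j k b)"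
    proof (cases "\<beta> \<in> Cns i")
      case True
      then obtain p where p: "p \<in> P" "\<beta> = restrict (lab p) (Ti i)" unfolding Cns_def by blast
      have c0: "c \<ge> 0" unfolding c_def by (simp add: real_root_ge_zero)
      have k: "\<sigma> (snd p) i \<le> n" using sig_le P_snd[OF p(1)] i by blast
      have e: "loc i \<beta> = (\<lambda>b. complex_of_real c * w (fst p) (\<sigma> (snd p) i) b)"
        using loc_cons[OF p(1) i] p(2) by simp
      have "\<exists>c'::real. c' \<ge> 0 \<and> loc i \<beta> = (\<lambda>b. complex_of_real c' * w (fst p) (\<sigma> (snd p) i) b)"
        using c0 e by blast
      then have "\<exists>k\<le>n. \<exists>c'::real. c' \<ge> 0 \<and> loc i \<beta> = (\<lambda>b. complex_of_real c' * w (fst p) k b)"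
        using k by blast
      then show ?thesis using P_fst[OF p(1)] by blast
    next
      case False
      have "\<beta> (x0 i) \<in> I" using b x0_in[OF i] by blast
      then obtain p where "p \<in> P" unfolding I_def by blast
      then have j: "fst p \<in> J" by (rule P_fst)
      have e: "loc i \<beta> = (\<lambda>b. complex_of_real 0 * w (fst p) 0 b)" using False unfolding loc_def by simp
      have "\<exists>c'::real. c' \<ge> 0 \<and> loc i \<beta> = (\<lambda>b. complex_of_real c' * w (fst p) 0 b)"
        using e by (intro exI[of _ 0]) simp
      then have "\<exists>k\<le>n. \<exists>c'::real. c' \<ge> 0 \<and> loc i \<beta> = (\<lambda>b. complex_of_real c' * w (fst p) k b)"
        by blast
      then show ?thesis using j by blast
    qed
  qed
  show ?thesis using D C by blast
qed

end

lemma part2: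
  fixes n :: nat and \<Omega> :: "nat set \<Rightarrow> nat" and G :: "('gg, 'mm) monoid_scheme"
    and \<sigma> :: "'gg \<Rightarrow> nat \<Rightarrow> nat" and \<tau> :: "'gg \<Rightarrow> nat set \<times> nat \<Rightarrow> nat set \<times> nat"
    and B :: "nat \<Rightarrow> 'bb set" and v :: "(nat \<Rightarrow> 'bb) \<Rightarrow> complex"
    and J :: "'jj set" and w :: "'jj \<Rightarrow> nat \<Rightarrow> 'bb \<Rightarrow> complex"
  assumes a1: "wsc n \<Omega>" and a2: "wsc_connected n \<Omega>"
    and a3: "free_wsc_action n \<Omega> G \<sigma> \<tau>"
    and a4: "\<forall>g\<in>carrier G. \<forall>i\<le>n. B (\<sigma> g i) = B i"
    and a5: "v \<in> tensor_sp n B"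
    and a6: "G_invariant n G \<sigma> B v"
    and a7: "finite J" and a8: "\<forall>j\<in>J. \<forall>i\<le>n. w j i \<in> vsp (B i)" and a9: "v = (\<Sum>j\<in>J. etensor n (w j))"
  shows "\<exists>I loc. is_OG_decomp n \<Omega> G \<sigma> \<tau> B v I loc \<and>
                (\<forall>i\<le>n. \<forall>\<beta>\<in>tFi n \<Omega> i \<rightarrow>\<^sub>E I. \<exists>j\<in>J. \<exists>k\<le>n. \<exists>c::real. c \<ge> 0 \<and>
                    loc i \<beta> = (\<lambda>b. complex_of_real c * w j k b))"
proof -
  have sx: "Sx n \<Omega> G \<sigma> \<tau>" using a1 a2 a3 by (rule Sx.intro)
  interpret Sx n \<Omega> G \<sigma> \<tau> by (rule sx)
  have "finite (J \<times> carrier G)" using a7 G_fin by simp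
  then have "\<exists>(d :: 'jj \<times> 'gg \<Rightarrow> nat) m. d ` (J \<times> carrier G) = {i. i < m} \<and> inj_on d (J \<times> carrier G)"
    by (rule finite_imp_inj_to_nat_seg)
  then obtain d :: "'jj \<times> 'gg \<Rightarrow> nat" where dinj: "inj_on d (J \<times> carrier G)"
    by blast
  interpret Sy n \<Omega> G \<sigma> \<tau> B v J w d
    by (rule Sy.intro[OF sx Sy_axioms.intro]) (rule a4 a5 a6 a7 a8 a9 dinj)+
  show ?thesis using main .
qed

lemma elem_decomp:
  fixes v :: "(nat \<Rightarrow> 'b) \<Rightarrow> complex"
  assumes "v \<in> tensor_sp n B"
  shows "\<exists>(J :: (nat \<Rightarrow> 'b) set) w. finite J \<and> (\<forall>j\<in>J. \<forall>i\<le>n. w j i \<in> vsp (B i)) \<and> v = (\<Sum>j\<in>J. etensor n (w j))"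
proof -
  define J where "J = {x. v x \<noteq> 0}"
  define w where "w x i = (\<lambda>b. if b = x i then (if i = 0 then v x else 1) else 0)" for x :: "nat \<Rightarrow> 'b" and i
  have finJ: "finite J" and JP: "J \<subseteq> PiE {..n} B" using assms unfolding J_def tensor_sp_def by auto
  have wv: "\<forall>j\<in>J. \<forall>i\<le>n. w j i \<in> vsp (B i)"
  proof (intro ballI allI impI)
    fix j i assume j: "j \<in> J" and i: "i \<le> n"
    have "j i \<in> B i" using JP j i by (auto simp: PiE_def Pi_def)
    moreover have "{b. w j i b \<noteq> 0} \<subseteq> {j i}" unfolding w_def by auto
    ultimately show "w j i \<in> vsp (B i)" unfolding vsp_def using finite_subset by fastforce
  qed
  have et: "etensor n (w x) y = (if y = x then v x else 0)" if x: "x \<in> J" for x y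
  proof -
    have xe: "x \<in> extensional {..n}" using JP x by (auto simp: PiE_def)
    show ?thesis
    proof (cases "y = x")
      case True
      have "(\<Prod>i\<le>n. w x i (y i)) = (\<Prod>i\<le>n. if i = 0 then v x else 1)"
        unfolding w_def True by (intro prod.cong) auto
      also have "\<dots> = v x" by (subst prod.delta) auto
      finally show ?thesis unfolding etensor_def using True xe by simp
    next
      case False
      show ?thesis
      proof (cases "y \<in> extensional {..n}")
        case True
        then obtain i where i: "i \<le> n" "y i \<noteq> x i" using False xe extensionalityI by (metis atMost_iff)
        have "w x i (y i) = 0" using i unfolding w_def by simp
        then have "\<exists>k\<in>{..n}. w x k (y k) = 0" using i(1) by blast
        then have "(\<Prod>i\<le>n. w x i (y i)) = 0" by (intro prod_zero) auto
        then show ?thesis unfolding etensor_def using False by simp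
      next
        case False
        then show ?thesis unfolding etensor_def using \<open>y \<noteq> x\<close> by simp
      qed
    qed
  qed
  have "v = (\<Sum>j\<in>J. etensor n (w j))"
  proof (rule ext)
    fix y
    have "(\<Sum>j\<in>J. etensor n (w j)) y = (\<Sum>j\<in>J. if y = j then v j else 0)"
      unfolding sum_fun_apply using et by (intro sum.cong) auto
    also have "\<dots> = (if y \<in> J then v y else 0)" using finJ by (simp add: sum.delta)
    also have "\<dots> = v y" unfolding J_def by simp
    finally show "v y = (\<Sum>j\<in>J. etensor n (w j)) y" by simp
  qed
  then show ?thesis using finJ wv by blast
qed

theorem theorem3p6:
  fixes n :: nat and \<Omega> :: "nat set \<Rightarrow> nat" and G :: "('g, 'm) monoid_scheme"
    and \<sigma> :: "'g \<Rightarrow> nat \<Rightarrow> nat" and \<tau> :: "'g \<Rightarrow> nat set \<times> nat \<Rightarrow> nat set \<times> nat"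
    and B :: "nat \<Rightarrow> 'b set" and v :: "(nat \<Rightarrow> 'b) \<Rightarrow> complex"
  assumes "wsc n \<Omega>" and "wsc_connected n \<Omega>"
    and "free_wsc_action n \<Omega> G \<sigma> \<tau>"
    and "\<forall>g\<in>carrier G. \<forall>i\<le>n. B (\<sigma> g i) = B i"
    and "v \<in> tensor_sp n B"
    and "G_invariant n G \<sigma> B v"
  shows "rank_OG n \<Omega> G \<sigma> \<tau> B v < \<infinity>
    \<and> (\<forall>(J :: 'j set) (w :: 'j \<Rightarrow> nat \<Rightarrow> 'b \<Rightarrow> complex).
          finite J \<and> (\<forall>j\<in>J. \<forall>i\<le>n. w j i \<in> vsp (B i)) \<and> v = (\<Sum>j\<in>J. etensor n (w j))
          \<longrightarrow> (\<exists>I loc. is_OG_decomp n \<Omega> G \<sigma> \<tau> B v I loc \<and>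
                (\<forall>i\<le>n. \<forall>\<beta>\<in>tFi n \<Omega> i \<rightarrow>\<^sub>E I. \<exists>j\<in>J. \<exists>k\<le>n. \<exists>c::real. c \<ge> 0 \<and>
                    loc i \<beta> = (\<lambda>b. complex_of_real c * w j k b))))"

proof (rule conjI)
  obtain J0 :: "(nat \<Rightarrow> 'b) set" and w0 where
    h: "finite J0" "\<forall>j\<in>J0. \<forall>i\<le>n. w0 j i \<in> vsp (B i)" "v = (\<Sum>j\<in>J0. etensor n (w0 j))"
    using elem_decomp[OF assms(5)] by blast
  obtain I loc where "is_OG_decomp n \<Omega> G \<sigma> \<tau> B v I loc"
    using part2[OF assms h] by blast
  then have ex: "\<exists>I loc. is_OG_decomp n \<Omega> G \<sigma> \<tau> B v I loc" by blast
  show "rank_OG n \<Omega> G \<sigma> \<tau> B v < \<infinity>" unfolding rank_OG_def using ex by simp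
next
  show "\<forall>(J :: 'j set) (w :: 'j \<Rightarrow> nat \<Rightarrow> 'b \<Rightarrow> complex).
          finite J \<and> (\<forall>j\<in>J. \<forall>i\<le>n. w j i \<in> vsp (B i)) \<and> v = (\<Sum>j\<in>J. etensor n (w j))
          \<longrightarrow> (\<exists>I loc. is_OG_decomp n \<Omega> G \<sigma> \<tau> B v I loc \<and>
                (\<forall>i\<le>n. \<forall>\<beta>\<in>tFi n \<Omega> i \<rightarrow>\<^sub>E I. \<exists>j\<in>J. \<exists>k\<le>n. \<exists>c::real. c \<ge> 0 \<and>
                    loc i \<beta> = (\<lambda>b. complex_of_real c * w j k b)))"
  proof (intro allI impI)
    fix J :: "'j set" and w :: "'j \<Rightarrow> nat \<Rightarrow> 'b \<Rightarrow> complex"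
    assume h: "finite J \<and> (\<forall>j\<in>J. \<forall>i\<le>n. w j i \<in> vsp (B i)) \<and> v = (\<Sum>j\<in>J. etensor n (w j))"
    show "\<exists>I loc. is_OG_decomp n \<Omega> G \<sigma> \<tau> B v I loc \<and>
                (\<forall>i\<le>n. \<forall>\<beta>\<in>tFi n \<Omega> i \<rightarrow>\<^sub>E I. \<exists>j\<in>J. \<exists>k\<le>n. \<exists>c::real. c \<ge> 0 \<and>
                    loc i \<beta> = (\<lambda>b. complex_of_real c * w j k b))"
      by (rule part2[OF assms conjunct1[OF h] conjunct1[OF conjunct2[OF h]] conjunct2[OF conjunct2[OF h]]])
  qed
qed

end
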